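(* Let $\mathcal G=\mathfrak g_1\oplus\mathfrak g_2$ and $\Theta\in C^1_{\mathsf{LTS}}(\mathcal G,\mathcal G)$, decomposed as $\Theta=\hat\phi_1+\hat\mu_1+\hat\psi+\hat\mu_2+\hat\phi_2$. Then the Maurer–Cartan equation $[\Theta,\Theta]_{\mathsf{LTS}}=0$ is equivalent to the following conditions: $[\hat\phi_1,\hat\mu_1]_{\mathsf{LTS}}=0$; $[\hat\psi,\hat\phi_1]_{\mathsf{LTS}}+\frac12[\hat\mu_1,\hat\mu_1]_{\mathsf{LTS}}=0$; $[\hat\phi_1,\hat\mu_2]_{\mathsf{LTS}}+[\hat\psi,\hat\mu_1]_{\mathsf{LTS}}=0$; $[\hat\phi_1,\hat\phi_2]_{\mathsf{LTS}}+[\hat\mu_1,\hat\mu_2]_{\mathsf{LTS}}+\frac12[\hat\psi,\hat\psi]_{\mathsf{LTS}}=0$; $[\hat\mu_1,\hat\phi_2]_{\mathsf{LTS}}+[\hat\psi,\hat\mu_2]_{\mathsf{LTS}}=0$; $[\hat\psi,\hat\phi_2]_{\mathsf{LTS}}+\frac12[\hat\mu_2,\hat\mu_2]_{\mathsf{LTS}}=0$; $[\hat\mu_2,\hat\phi_2]_{\mathsf{LTS}}=0$.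
   Context: All vector spaces are over a field of characteristic $0$. Cochains: $C^p(\mathcal G,\mathcal G)=\mathrm{Hom}(\otimes^{2p+1}\mathcal G,\mathcal G)$, arguments $(\mathfrak X_1,\dots,\mathfrak X_p,x)$, $\mathfrak X_i=x_i\otimes y_i$; for $P\in C^p,Q\in C^q$, $(P\circ Q)(\mathfrak X_1,\dots,\mathfrak X_{p+q},x)=\sum_{k=1}^p(-1)^{(k-1)q}\sum_{\sigma\in\mathbb S(k-1,q)}(-1)^\sigma P(\mathfrak X_{\sigma(1)},\dots,\mathfrak X_{\sigma(k-1)},Q(\mathfrak X_{\sigma(k)},\dots,\mathfrak X_{\sigma(k+q-1)},x_{k+q})\otimes y_{k+q},\mathfrak X_{k+q+1},\dots,x)+\sum_{k=1}^p(-1)^{(k-1)q}\sum_{\sigma\in\mathbb S(k-1,q)}(-1)^\sigma P(\mathfrak X_{\sigma(1)},\dots,\mathfrak X_{\sigma(k-1)},x_{k+q}\otimes Q(\mathfrak X_{\sigma(k)},\dots,\mathfrak X_{\sigma(k+q-1)},y_{k+q}),\mathfrak X_{k+q+1},\dots,x)+\sum_{\sigma\in\mathbb S(p,q)}(-1)^\sigma P(\mathfrak X_{\sigma(1)},\dots,\mathfrak X_{\sigma(p)},Q(\mathfrak X_{\sigma(p+1)},\dots,\mathfrak X_{\sigma(p+q)},x))$ ($\mathbb S$ = shuffles), $[P,Q]=P\circ Q-(-1)^{pq}Q\circ P$. $C^p_{\mathsf{LTS}}(\mathcal G,\mathcal G)$ is the subspace of $P$ with $P(\dots,x,x,y)=0$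 and $P(\dots,x,y,z)+P(\dots,y,z,x)+P(\dots,z,x,y)=0$; the restricted bracket is $[\cdot,\cdot]_{\mathsf{LTS}}$. Decomposition: writing $\Theta(a,b,c)=[a,b,c]$ and $[a,b,c]_i$ for its $\mathfrak g_i$-component, with $x,y,z\in\mathfrak g_1$, $u,v,w\in\mathfrak g_2$: $\hat\phi_1((x,u),(y,v),(z,w))=(0,[x,y,z]_2)$; $\hat\mu_1=([x,y,z]_1,[x,y,w]_2+[u,y,z]_2-[v,x,z]_2)$; $\hat\psi=([x,y,w]_1+[u,y,z]_1-[v,x,z]_1,[u,v,z]_2+[x,v,w]_2-[y,u,w]_2)$; $\hat\mu_2=([u,v,z]_1+[x,v,w]_1-[y,u,w]_1,[u,v,w]_2)$; $\hat\phi_2=([u,v,w]_1,0)$. These are the components of $\Theta$ of bidegrees $3|-1,2|0,1|1,0|2,-1|3$ (bidegree $l|k$ meaning: tensors with $l+1$ factors from $\mathfrak g_1$ and $k$ from $\mathfrak g_2$ go to $\mathfrak g_1$, tensors with $l$ from $\mathfrak g_1$ and $k+1$ from $\mathfrak g_2$ go to $\mathfrak g_2$, all other tensor types go to $0$). *)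

theory Defs
  imports Main "HOL.Vector_Spaces" "HOL-Library.Product_Plus" "HOL-Combinatorics.Permutations"
begin

text \<open>A p-cochain P in C^p(G,G) = Hom(tensor^(2p+1) G, G) is represented by its
  values on pure tensors: P Xs x, where Xs = [X_1,...,X_p] is the list of pairs
  X_i = (x_i, y_i) and x is the last argument.  Only lists of length p are meaningful.\<close>

type_synonym 'v cochain = "('v \<times> 'v) list \<Rightarrow> 'v \<Rightarrow> 'v"

text \<open>(a, n-a)-shuffles of {0..<n} (0-indexed version of S(a, n-a)).\<close>
definition shuffles :: "nat \<Rightarrow> nat \<Rightarrow> (nat \<Rightarrow> nat) set" where
  "shuffles a n = {\<sigma>. \<sigma> permutes {..<n} \<and> strict_mono_on {..<a} \<sigma> \<and> strict_mono_on {a..<n} \<sigma>}"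

text \<open>The composition P o Q for P in C^p, Q in C^q (k below is the paper's k minus 1).\<close>
definition circ :: "('k::field \<Rightarrow> 'v::ab_group_add \<Rightarrow> 'v) \<Rightarrow> nat \<Rightarrow> nat \<Rightarrow> 'v cochain \<Rightarrow> 'v cochain \<Rightarrow> 'v cochain" where
  "circ smul p q P Q = (\<lambda>Xs x.
     (\<Sum>k<p. smul ((-1) ^ (k * q))
        (\<Sum>\<sigma>\<in>shuffles k (k + q). smul (of_int (sign \<sigma>))
          (P (map (\<lambda>i. Xs ! \<sigma> i) [0..<k]
              @ [(Q (map (\<lambda>i. Xs ! \<sigma> i) [k..<k + q]) (fst (Xs ! (k + q))), snd (Xs ! (k + q)))]
              @ drop (k + q + 1) Xs) x)))
   + (\<Sum>k<p. smul ((-1) ^ (k * q))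
        (\<Sum>\<sigma>\<in>shuffles k (k + q). smul (of_int (sign \<sigma>))
          (P (map (\<lambda>i. Xs ! \<sigma> i) [0..<k]
              @ [(fst (Xs ! (k + q)), Q (map (\<lambda>i. Xs ! \<sigma> i) [k..<k + q]) (snd (Xs ! (k + q))))]
              @ drop (k + q + 1) Xs) x)))
   + (\<Sum>\<sigma>\<in>shuffles p (p + q). smul (of_int (sign \<sigma>))
        (P (map (\<lambda>i. Xs ! \<sigma> i) [0..<p]) (Q (map (\<lambda>i. Xs ! \<sigma> i) [p..<p + q]) x))))"

definition brk :: "('k::field \<Rightarrow> 'v::ab_group_add \<Rightarrow> 'v) \<Rightarrow> nat \<Rightarrow> nat \<Rightarrow> 'v cochain \<Rightarrow> 'v cochain \<Rightarrow> 'v cochain" where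
  "brk smul p q P Q = (\<lambda>Xs x. circ smul p q P Q Xs x - smul ((-1) ^ (p * q)) (circ smul q p Q P Xs x))"

definition cadd :: "'v::ab_group_add cochain \<Rightarrow> 'v cochain \<Rightarrow> 'v cochain" where
  "cadd F G = (\<lambda>Xs x. F Xs x + G Xs x)"

definition cscale :: "('k \<Rightarrow> 'v \<Rightarrow> 'v) \<Rightarrow> 'k \<Rightarrow> 'v cochain \<Rightarrow> 'v cochain" where
  "cscale smul c F = (\<lambda>Xs x. smul c (F Xs x))"

definition cochain_zero :: "nat \<Rightarrow> 'v::zero cochain \<Rightarrow> bool" where
  "cochain_zero n F \<longleftrightarrow> (\<forall>Xs x. length Xs = n \<longrightarrow> F Xs x = 0)"

definition ch1 :: "('v \<Rightarrow> 'v \<Rightarrow> 'v \<Rightarrow> 'v) \<Rightarrow> 'v cochain" where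
  "ch1 T = (\<lambda>Xs x. T (fst (hd Xs)) (snd (hd Xs)) x)"

text \<open>The direct sum G = g1 (+) g2 as the product type with componentwise scaling.\<close>
definition prod_scale :: "('k \<Rightarrow> 'a \<Rightarrow> 'a) \<Rightarrow> ('k \<Rightarrow> 'b \<Rightarrow> 'b) \<Rightarrow> 'k \<Rightarrow> 'a \<times> 'b \<Rightarrow> 'a \<times> 'b" where
  "prod_scale s1 s2 c v = (s1 c (fst v), s2 c (snd v))"

definition trilinear :: "('k::field \<Rightarrow> 'v::ab_group_add \<Rightarrow> 'v) \<Rightarrow> ('v \<Rightarrow> 'v \<Rightarrow> 'v \<Rightarrow> 'v) \<Rightarrow> bool" where
  "trilinear S T \<longleftrightarrow>
     (\<forall>b c. Vector_Spaces.linear S S (\<lambda>a. T a b c)) \<and>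
     (\<forall>a c. Vector_Spaces.linear S S (\<lambda>b. T a b c)) \<and>
     (\<forall>a b. Vector_Spaces.linear S S (\<lambda>c. T a b c))"

definition LTS_cochain1 :: "('k::field \<Rightarrow> 'v::ab_group_add \<Rightarrow> 'v) \<Rightarrow> ('v \<Rightarrow> 'v \<Rightarrow> 'v \<Rightarrow> 'v) \<Rightarrow> bool" where
  "LTS_cochain1 S T \<longleftrightarrow> trilinear S T \<and> (\<forall>x y. T x x y = 0) \<and>
     (\<forall>x y z. T x y z + T y z x + T z x y = 0)"

text \<open>Components of Theta; [a,b,c]_1 = fst (T a b c), [a,b,c]_2 = snd (T a b c),
  with g1, g2 embedded as (x,0), (0,u).\<close>
definition phi1 :: "(('a::zero \<times> 'b::zero) \<Rightarrow> ('a \<times> 'b) \<Rightarrow> ('a \<times> 'b) \<Rightarrow> ('a \<times> 'b)) \<Rightarrow> ('a \<times> 'b) \<Rightarrow> ('a \<times> 'b) \<Rightarrow> ('a \<times> 'b) \<Rightarrow> ('a \<times> 'b)" where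
  "phi1 T = (\<lambda>(x,u) (y,v) (z,w). (0, snd (T (x,0) (y,0) (z,0))))"

definition mu1 :: "(('a::ab_group_add \<times> 'b::ab_group_add) \<Rightarrow> ('a \<times> 'b) \<Rightarrow> ('a \<times> 'b) \<Rightarrow> ('a \<times> 'b)) \<Rightarrow> ('a \<times> 'b) \<Rightarrow> ('a \<times> 'b) \<Rightarrow> ('a \<times> 'b) \<Rightarrow> ('a \<times> 'b)" where
  "mu1 T = (\<lambda>(x,u) (y,v) (z,w). (fst (T (x,0) (y,0) (z,0)),
      snd (T (x,0) (y,0) (0,w)) + snd (T (0,u) (y,0) (z,0)) - snd (T (0,v) (x,0) (z,0))))"

definition psi :: "(('a::ab_group_add \<times> 'b::ab_group_add) \<Rightarrow> ('a \<times> 'b) \<Rightarrow> ('a \<times> 'b) \<Rightarrow> ('a \<times> 'b)) \<Rightarrow> ('a \<times> 'b) \<Rightarrow> ('a \<times> 'b) \<Rightarrow> ('a \<times> 'b) \<Rightarrow> ('a \<times> 'b)" where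
  "psi T = (\<lambda>(x,u) (y,v) (z,w).
     (fst (T (x,0) (y,0) (0,w)) + fst (T (0,u) (y,0) (z,0)) - fst (T (0,v) (x,0) (z,0)),
      snd (T (0,u) (0,v) (z,0)) + snd (T (x,0) (0,v) (0,w)) - snd (T (y,0) (0,u) (0,w))))"

definition mu2 :: "(('a::ab_group_add \<times> 'b::ab_group_add) \<Rightarrow> ('a \<times> 'b) \<Rightarrow> ('a \<times> 'b) \<Rightarrow> ('a \<times> 'b)) \<Rightarrow> ('a \<times> 'b) \<Rightarrow> ('a \<times> 'b) \<Rightarrow> ('a \<times> 'b) \<Rightarrow> ('a \<times> 'b)" where
  "mu2 T = (\<lambda>(x,u) (y,v) (z,w).
     (fst (T (0,u) (0,v) (z,0)) + fst (T (x,0) (0,v) (0,w)) - fst (T (y,0) (0,u) (0,w)),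
      snd (T (0,u) (0,v) (0,w))))"

definition phi2 :: "(('a::zero \<times> 'b::zero) \<Rightarrow> ('a \<times> 'b) \<Rightarrow> ('a \<times> 'b) \<Rightarrow> ('a \<times> 'b)) \<Rightarrow> ('a \<times> 'b) \<Rightarrow> ('a \<times> 'b) \<Rightarrow> ('a \<times> 'b) \<Rightarrow> ('a \<times> 'b)" where
  "phi2 T = (\<lambda>(x,u) (y,v) (z,w). (fst (T (0,u) (0,v) (0,w)), 0))"

end

theory Submission
  imports Defs
begin

lemma shuf01: "shuffles 0 1 = {id}"
  by (auto simp: shuffles_def lessThan_Suc strict_mono_on_def)

lemma perm2: assumes "\<sigma> permutes {..<2::nat}" shows "\<sigma> = id \<or> \<sigma> = transpose 0 1"
proof -
  have r: "\<And>x. x < 2 \<Longrightarrow> \<sigma> x < 2" using permutes_in_image[OF assms] by auto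
  have o: "\<And>x. \<not> x < 2 \<Longrightarrow> \<sigma> x = x" using assms by (auto simp: permutes_def)
  have i: "inj \<sigma>" using permutes_inj[OF assms] .
  have "\<sigma> 0 \<noteq> \<sigma> 1" using i by (metis inj_eq zero_neq_one)
  moreover have "\<sigma> 0 < 2" "\<sigma> 1 < 2" using r by auto
  ultimately consider "\<sigma> 0 = 0" "\<sigma> 1 = 1" | "\<sigma> 0 = 1" "\<sigma> 1 = 0" by linarith
  then show ?thesis
  proof cases
    case 1 then have "\<sigma> = id" using o by (auto simp: fun_eq_iff) (metis less_2_cases_iff)
    then show ?thesis by simp
  next
    case 2 then have "\<sigma> = transpose 0 1" using o by (auto simp: fun_eq_iff transpose_def)
    then show ?thesis by simp
  qed
qed

lemma shuf12: "shuffles 1 2 = {id, transpose 0 1}"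
proof -
  have "transpose (0::nat) 1 permutes {..<2}"
    by (rule permutes_swap_id) auto
  then show ?thesis
    using perm2 by (auto simp: shuffles_def strict_mono_on_def)
qed

lemma circ11:
  assumes s1: "\<And>v. S 1 v = v" and sm: "\<And>v. S (-1) v = - v"
  shows "circ S 1 1 P Q [X0, X1] x =
     P [(Q [X0] (fst X1), snd X1)] x + P [(fst X1, Q [X0] (snd X1))] x
     + P [X0] (Q [X1] x) - P [X1] (Q [X0] x)"
proof -
  have ne: "id \<noteq> transpose (0::nat) 1" by (metis id_apply transpose_apply_first zero_neq_one)
  show ?thesis
    unfolding circ_def shuf01 shuf12
    using ne shuf01 shuf12 numeral_2_eq_2 by (simp add: s1 sm sign_swap_id)
qed

lemma brk11:
  assumes s1: "\<And>v. S 1 v = v" and sm: "\<And>v. S (-1) v = - v"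
  shows "brk S 1 1 P Q [X0, X1] x = circ S 1 1 P Q [X0, X1] x + circ S 1 1 Q P [X0, X1] x"
  unfolding brk_def by (simp add: sm)


definition tadd :: "('g::ab_group_add \<Rightarrow> 'g \<Rightarrow> 'g \<Rightarrow> 'g) \<Rightarrow> bool" where
  "tadd f \<longleftrightarrow> (\<forall>x x' y z. f (x + x') y z = f x y z + f x' y z) \<and>
     (\<forall>x y y' z. f x (y + y') z = f x y z + f x y' z) \<and>
     (\<forall>x y z z'. f x y (z + z') = f x y z + f x y z')"

lemma tadd_add:
  assumes "tadd f"
  shows "f (x + x') y z = f x y z + f x' y z" "f x (y + y') z = f x y z + f x y' z"
    "f x y (z + z') = f x y z + f x y z'"
  using assms unfolding tadd_def by blast+

lemma tadd_zero:
  assumes "tadd f" shows "f 0 y z = 0" "f x 0 z = 0" "f x y 0 = 0"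
proof -
  show "f 0 y z = 0" using tadd_add(1)[OF assms, of 0 0 y z] by simp
  show "f x 0 z = 0" using tadd_add(2)[OF assms, of x 0 0 z] by simp
  show "f x y 0 = 0" using tadd_add(3)[OF assms, of x y 0 0] by simp
qed

lemma tadd_neg:
  assumes "tadd f" shows "f (- x) y z = - f x y z" "f x (- y) z = - f x y z" "f x y (- z) = - f x y z"
proof -
  have "f x y z + f (- x) y z = 0" using tadd_add(1)[OF assms, of x "-x" y z] tadd_zero(1)[OF assms, of y z] by simp
  then show "f (- x) y z = - f x y z" by (metis neg_eq_iff_add_eq_0)
  have "f x y z + f x (- y) z = 0" using tadd_add(2)[OF assms, of x y "-y" z] tadd_zero(2)[OF assms, of x z] by simp
  then show "f x (- y) z = - f x y z" by (metis neg_eq_iff_add_eq_0)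
  have "f x y z + f x y (- z) = 0" using tadd_add(3)[OF assms, of x y z "-z"] tadd_zero(3)[OF assms, of x y] by simp
  then show "f x y (- z) = - f x y z" by (metis neg_eq_iff_add_eq_0)
qed

lemma tadd_diff:
  assumes "tadd f" shows "f (x - x') y z = f x y z - f x' y z" "f x (y - y') z = f x y z - f x y' z"
    "f x y (z - z') = f x y z - f x y z'"
proof -
  show "f (x - x') y z = f x y z - f x' y z"
    using tadd_add(1)[OF assms, of x "-x'" y z] tadd_neg(1)[OF assms, of x' y z] by (simp only: diff_conv_add_uminus)
  show "f x (y - y') z = f x y z - f x y' z"
    using tadd_add(2)[OF assms, of x y "-y'" z] tadd_neg(2)[OF assms, of x y' z] by (simp only: diff_conv_add_uminus)
  show "f x y (z - z') = f x y z - f x y z'"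
    using tadd_add(3)[OF assms, of x y z "-z'"] tadd_neg(3)[OF assms, of x y z'] by (simp only: diff_conv_add_uminus)
qed

definition t111 :: "(('a::ab_group_add \<times> 'b::ab_group_add) \<Rightarrow> ('a \<times> 'b) \<Rightarrow> ('a \<times> 'b) \<Rightarrow> ('a \<times> 'b)) \<Rightarrow> _" where
  "t111 T p q r = T (p,0) (q,0) (r,0)"

definition t112 :: "(('a::ab_group_add \<times> 'b::ab_group_add) \<Rightarrow> ('a \<times> 'b) \<Rightarrow> ('a \<times> 'b) \<Rightarrow> ('a \<times> 'b)) \<Rightarrow> _" where
  "t112 T p q r = T (p,0) (q,0) (0,r)"

definition t121 :: "(('a::ab_group_add \<times> 'b::ab_group_add) \<Rightarrow> ('a \<times> 'b) \<Rightarrow> ('a \<times> 'b) \<Rightarrow> ('a \<times> 'b)) \<Rightarrow> _" where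
  "t121 T p q r = T (p,0) (0,q) (r,0)"

definition t122 :: "(('a::ab_group_add \<times> 'b::ab_group_add) \<Rightarrow> ('a \<times> 'b) \<Rightarrow> ('a \<times> 'b) \<Rightarrow> ('a \<times> 'b)) \<Rightarrow> _" where
  "t122 T p q r = T (p,0) (0,q) (0,r)"

definition t211 :: "(('a::ab_group_add \<times> 'b::ab_group_add) \<Rightarrow> ('a \<times> 'b) \<Rightarrow> ('a \<times> 'b) \<Rightarrow> ('a \<times> 'b)) \<Rightarrow> _" where
  "t211 T p q r = T (0,p) (q,0) (r,0)"

definition t212 :: "(('a::ab_group_add \<times> 'b::ab_group_add) \<Rightarrow> ('a \<times> 'b) \<Rightarrow> ('a \<times> 'b) \<Rightarrow> ('a \<times> 'b)) \<Rightarrow> _" where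
  "t212 T p q r = T (0,p) (q,0) (0,r)"

definition t221 :: "(('a::ab_group_add \<times> 'b::ab_group_add) \<Rightarrow> ('a \<times> 'b) \<Rightarrow> ('a \<times> 'b) \<Rightarrow> ('a \<times> 'b)) \<Rightarrow> _" where
  "t221 T p q r = T (0,p) (0,q) (r,0)"

definition t222 :: "(('a::ab_group_add \<times> 'b::ab_group_add) \<Rightarrow> ('a \<times> 'b) \<Rightarrow> ('a \<times> 'b) \<Rightarrow> ('a \<times> 'b)) \<Rightarrow> _" where
  "t222 T p q r = T (0,p) (0,q) (0,r)"


lemma tsplit1: assumes "tadd T" shows "T x y z = T (fst x, 0) y z + T (0, snd x) y z"
  using tadd_add(1)[OF assms, of "(fst x, 0)" "(0, snd x)" y z] by simp
lemma tsplit2: assumes "tadd T" shows "T x y z = T x (fst y, 0) z + T x (0, snd y) z"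
  using tadd_add(2)[OF assms, of x "(fst y, 0)" "(0, snd y)" z] by simp
lemma tsplit3: assumes "tadd T" shows "T x y z = T x y (fst z, 0) + T x y (0, snd z)"
  using tadd_add(3)[OF assms, of x y "(fst z, 0)" "(0, snd z)"] by simp

lemma tsplit: assumes "tadd T" shows "T x y z = t111 T (fst x) (fst y) (fst z) + t112 T (fst x) (fst y) (snd z) + t121 T (fst x) (snd y) (fst z) + t122 T (fst x) (snd y) (snd z) + t211 T (snd x) (fst y) (fst z) + t212 T (snd x) (fst y) (snd z) + t221 T (snd x) (snd y) (fst z) + t222 T (snd x) (snd y) (snd z)"
  unfolding t111_def t112_def t121_def t122_def t211_def t212_def t221_def t222_def
  by (simp only: tsplit1[OF assms, of x y z] tsplit2[OF assms, of "(fst x, 0)" y z] tsplit2[OF assms, of "(0, snd x)" y z] tsplit3[OF assms, of "(fst x, 0)" "(fst y, 0)" z] tsplit3[OF assms, of "(fst x, 0)" "(0, snd y)" z] tsplit3[OF assms, of "(0, snd x)" "(fst y, 0)" z] tsplit3[OF assms, of "(0, snd x)" "(0, snd y)" z] add.assoc)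

lemma t111_add1: assumes "tadd T" shows "t111 T (p1 + p2) q r = t111 T p1 q r + t111 T p2 q r"
  using tadd_add(1)[OF assms, of "(p1,0)" "(p2,0)" "(q,0)" "(r,0)"] by (simp add: t111_def zero_prod_def)
lemma t111_zero1: assumes "tadd T" shows "t111 T 0 q r = 0"
  using tadd_zero(1)[OF assms, of "(q,0)" "(r,0)"] by (simp add: t111_def zero_prod_def)
lemma t111_neg1: assumes "tadd T" shows "t111 T (- p1) q r = - t111 T p1 q r"
  using tadd_neg(1)[OF assms, of "(p1,0)" "(q,0)" "(r,0)"] by (simp add: t111_def zero_prod_def)
lemma t111_diff1: assumes "tadd T" shows "t111 T (p1 - p2) q r = t111 T p1 q r - t111 T p2 q r"
  using tadd_diff(1)[OF assms, of "(p1,0)" "(p2,0)" "(q,0)" "(r,0)"] by (simp add: t111_def zero_prod_def)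
lemma t111_add2: assumes "tadd T" shows "t111 T p (p1 + p2) r = t111 T p p1 r + t111 T p p2 r"
  using tadd_add(2)[OF assms, of "(p,0)" "(p1,0)" "(p2,0)" "(r,0)"] by (simp add: t111_def zero_prod_def)
lemma t111_zero2: assumes "tadd T" shows "t111 T p 0 r = 0"
  using tadd_zero(2)[OF assms, of "(p,0)" "(r,0)"] by (simp add: t111_def zero_prod_def)
lemma t111_neg2: assumes "tadd T" shows "t111 T p (- p1) r = - t111 T p p1 r"
  using tadd_neg(2)[OF assms, of "(p,0)" "(p1,0)" "(r,0)"] by (simp add: t111_def zero_prod_def)
lemma t111_diff2: assumes "tadd T" shows "t111 T p (p1 - p2) r = t111 T p p1 r - t111 T p p2 r"
  using tadd_diff(2)[OF assms, of "(p,0)" "(p1,0)" "(p2,0)" "(r,0)"] by (simp add: t111_def zero_prod_def)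
lemma t111_add3: assumes "tadd T" shows "t111 T p q (p1 + p2) = t111 T p q p1 + t111 T p q p2"
  using tadd_add(3)[OF assms, of "(p,0)" "(q,0)" "(p1,0)" "(p2,0)"] by (simp add: t111_def zero_prod_def)
lemma t111_zero3: assumes "tadd T" shows "t111 T p q 0 = 0"
  using tadd_zero(3)[OF assms, of "(p,0)" "(q,0)"] by (simp add: t111_def zero_prod_def)
lemma t111_neg3: assumes "tadd T" shows "t111 T p q (- p1) = - t111 T p q p1"
  using tadd_neg(3)[OF assms, of "(p,0)" "(q,0)" "(p1,0)"] by (simp add: t111_def zero_prod_def)
lemma t111_diff3: assumes "tadd T" shows "t111 T p q (p1 - p2) = t111 T p q p1 - t111 T p q p2"
  using tadd_diff(3)[OF assms, of "(p,0)" "(q,0)" "(p1,0)" "(p2,0)"] by (simp add: t111_def zero_prod_def)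
lemma t112_add1: assumes "tadd T" shows "t112 T (p1 + p2) q r = t112 T p1 q r + t112 T p2 q r"
  using tadd_add(1)[OF assms, of "(p1,0)" "(p2,0)" "(q,0)" "(0,r)"] by (simp add: t112_def zero_prod_def)
lemma t112_zero1: assumes "tadd T" shows "t112 T 0 q r = 0"
  using tadd_zero(1)[OF assms, of "(q,0)" "(0,r)"] by (simp add: t112_def zero_prod_def)
lemma t112_neg1: assumes "tadd T" shows "t112 T (- p1) q r = - t112 T p1 q r"
  using tadd_neg(1)[OF assms, of "(p1,0)" "(q,0)" "(0,r)"] by (simp add: t112_def zero_prod_def)
lemma t112_diff1: assumes "tadd T" shows "t112 T (p1 - p2) q r = t112 T p1 q r - t112 T p2 q r"
  using tadd_diff(1)[OF assms, of "(p1,0)" "(p2,0)" "(q,0)" "(0,r)"] by (simp add: t112_def zero_prod_def)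
lemma t112_add2: assumes "tadd T" shows "t112 T p (p1 + p2) r = t112 T p p1 r + t112 T p p2 r"
  using tadd_add(2)[OF assms, of "(p,0)" "(p1,0)" "(p2,0)" "(0,r)"] by (simp add: t112_def zero_prod_def)
lemma t112_zero2: assumes "tadd T" shows "t112 T p 0 r = 0"
  using tadd_zero(2)[OF assms, of "(p,0)" "(0,r)"] by (simp add: t112_def zero_prod_def)
lemma t112_neg2: assumes "tadd T" shows "t112 T p (- p1) r = - t112 T p p1 r"
  using tadd_neg(2)[OF assms, of "(p,0)" "(p1,0)" "(0,r)"] by (simp add: t112_def zero_prod_def)
lemma t112_diff2: assumes "tadd T" shows "t112 T p (p1 - p2) r = t112 T p p1 r - t112 T p p2 r"
  using tadd_diff(2)[OF assms, of "(p,0)" "(p1,0)" "(p2,0)" "(0,r)"] by (simp add: t112_def zero_prod_def)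
lemma t112_add3: assumes "tadd T" shows "t112 T p q (p1 + p2) = t112 T p q p1 + t112 T p q p2"
  using tadd_add(3)[OF assms, of "(p,0)" "(q,0)" "(0,p1)" "(0,p2)"] by (simp add: t112_def zero_prod_def)
lemma t112_zero3: assumes "tadd T" shows "t112 T p q 0 = 0"
  using tadd_zero(3)[OF assms, of "(p,0)" "(q,0)"] by (simp add: t112_def zero_prod_def)
lemma t112_neg3: assumes "tadd T" shows "t112 T p q (- p1) = - t112 T p q p1"
  using tadd_neg(3)[OF assms, of "(p,0)" "(q,0)" "(0,p1)"] by (simp add: t112_def zero_prod_def)
lemma t112_diff3: assumes "tadd T" shows "t112 T p q (p1 - p2) = t112 T p q p1 - t112 T p q p2"
  using tadd_diff(3)[OF assms, of "(p,0)" "(q,0)" "(0,p1)" "(0,p2)"] by (simp add: t112_def zero_prod_def)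
lemma t121_add1: assumes "tadd T" shows "t121 T (p1 + p2) q r = t121 T p1 q r + t121 T p2 q r"
  using tadd_add(1)[OF assms, of "(p1,0)" "(p2,0)" "(0,q)" "(r,0)"] by (simp add: t121_def zero_prod_def)
lemma t121_zero1: assumes "tadd T" shows "t121 T 0 q r = 0"
  using tadd_zero(1)[OF assms, of "(0,q)" "(r,0)"] by (simp add: t121_def zero_prod_def)
lemma t121_neg1: assumes "tadd T" shows "t121 T (- p1) q r = - t121 T p1 q r"
  using tadd_neg(1)[OF assms, of "(p1,0)" "(0,q)" "(r,0)"] by (simp add: t121_def zero_prod_def)
lemma t121_diff1: assumes "tadd T" shows "t121 T (p1 - p2) q r = t121 T p1 q r - t121 T p2 q r"
  using tadd_diff(1)[OF assms, of "(p1,0)" "(p2,0)" "(0,q)" "(r,0)"] by (simp add: t121_def zero_prod_def)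
lemma t121_add2: assumes "tadd T" shows "t121 T p (p1 + p2) r = t121 T p p1 r + t121 T p p2 r"
  using tadd_add(2)[OF assms, of "(p,0)" "(0,p1)" "(0,p2)" "(r,0)"] by (simp add: t121_def zero_prod_def)
lemma t121_zero2: assumes "tadd T" shows "t121 T p 0 r = 0"
  using tadd_zero(2)[OF assms, of "(p,0)" "(r,0)"] by (simp add: t121_def zero_prod_def)
lemma t121_neg2: assumes "tadd T" shows "t121 T p (- p1) r = - t121 T p p1 r"
  using tadd_neg(2)[OF assms, of "(p,0)" "(0,p1)" "(r,0)"] by (simp add: t121_def zero_prod_def)
lemma t121_diff2: assumes "tadd T" shows "t121 T p (p1 - p2) r = t121 T p p1 r - t121 T p p2 r"
  using tadd_diff(2)[OF assms, of "(p,0)" "(0,p1)" "(0,p2)" "(r,0)"] by (simp add: t121_def zero_prod_def)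
lemma t121_add3: assumes "tadd T" shows "t121 T p q (p1 + p2) = t121 T p q p1 + t121 T p q p2"
  using tadd_add(3)[OF assms, of "(p,0)" "(0,q)" "(p1,0)" "(p2,0)"] by (simp add: t121_def zero_prod_def)
lemma t121_zero3: assumes "tadd T" shows "t121 T p q 0 = 0"
  using tadd_zero(3)[OF assms, of "(p,0)" "(0,q)"] by (simp add: t121_def zero_prod_def)
lemma t121_neg3: assumes "tadd T" shows "t121 T p q (- p1) = - t121 T p q p1"
  using tadd_neg(3)[OF assms, of "(p,0)" "(0,q)" "(p1,0)"] by (simp add: t121_def zero_prod_def)
lemma t121_diff3: assumes "tadd T" shows "t121 T p q (p1 - p2) = t121 T p q p1 - t121 T p q p2"
  using tadd_diff(3)[OF assms, of "(p,0)" "(0,q)" "(p1,0)" "(p2,0)"] by (simp add: t121_def zero_prod_def)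
lemma t122_add1: assumes "tadd T" shows "t122 T (p1 + p2) q r = t122 T p1 q r + t122 T p2 q r"
  using tadd_add(1)[OF assms, of "(p1,0)" "(p2,0)" "(0,q)" "(0,r)"] by (simp add: t122_def zero_prod_def)
lemma t122_zero1: assumes "tadd T" shows "t122 T 0 q r = 0"
  using tadd_zero(1)[OF assms, of "(0,q)" "(0,r)"] by (simp add: t122_def zero_prod_def)
lemma t122_neg1: assumes "tadd T" shows "t122 T (- p1) q r = - t122 T p1 q r"
  using tadd_neg(1)[OF assms, of "(p1,0)" "(0,q)" "(0,r)"] by (simp add: t122_def zero_prod_def)
lemma t122_diff1: assumes "tadd T" shows "t122 T (p1 - p2) q r = t122 T p1 q r - t122 T p2 q r"
  using tadd_diff(1)[OF assms, of "(p1,0)" "(p2,0)" "(0,q)" "(0,r)"] by (simp add: t122_def zero_prod_def)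
lemma t122_add2: assumes "tadd T" shows "t122 T p (p1 + p2) r = t122 T p p1 r + t122 T p p2 r"
  using tadd_add(2)[OF assms, of "(p,0)" "(0,p1)" "(0,p2)" "(0,r)"] by (simp add: t122_def zero_prod_def)
lemma t122_zero2: assumes "tadd T" shows "t122 T p 0 r = 0"
  using tadd_zero(2)[OF assms, of "(p,0)" "(0,r)"] by (simp add: t122_def zero_prod_def)
lemma t122_neg2: assumes "tadd T" shows "t122 T p (- p1) r = - t122 T p p1 r"
  using tadd_neg(2)[OF assms, of "(p,0)" "(0,p1)" "(0,r)"] by (simp add: t122_def zero_prod_def)
lemma t122_diff2: assumes "tadd T" shows "t122 T p (p1 - p2) r = t122 T p p1 r - t122 T p p2 r"
  using tadd_diff(2)[OF assms, of "(p,0)" "(0,p1)" "(0,p2)" "(0,r)"] by (simp add: t122_def zero_prod_def)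
lemma t122_add3: assumes "tadd T" shows "t122 T p q (p1 + p2) = t122 T p q p1 + t122 T p q p2"
  using tadd_add(3)[OF assms, of "(p,0)" "(0,q)" "(0,p1)" "(0,p2)"] by (simp add: t122_def zero_prod_def)
lemma t122_zero3: assumes "tadd T" shows "t122 T p q 0 = 0"
  using tadd_zero(3)[OF assms, of "(p,0)" "(0,q)"] by (simp add: t122_def zero_prod_def)
lemma t122_neg3: assumes "tadd T" shows "t122 T p q (- p1) = - t122 T p q p1"
  using tadd_neg(3)[OF assms, of "(p,0)" "(0,q)" "(0,p1)"] by (simp add: t122_def zero_prod_def)
lemma t122_diff3: assumes "tadd T" shows "t122 T p q (p1 - p2) = t122 T p q p1 - t122 T p q p2"
  using tadd_diff(3)[OF assms, of "(p,0)" "(0,q)" "(0,p1)" "(0,p2)"] by (simp add: t122_def zero_prod_def)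
lemma t211_add1: assumes "tadd T" shows "t211 T (p1 + p2) q r = t211 T p1 q r + t211 T p2 q r"
  using tadd_add(1)[OF assms, of "(0,p1)" "(0,p2)" "(q,0)" "(r,0)"] by (simp add: t211_def zero_prod_def)
lemma t211_zero1: assumes "tadd T" shows "t211 T 0 q r = 0"
  using tadd_zero(1)[OF assms, of "(q,0)" "(r,0)"] by (simp add: t211_def zero_prod_def)
lemma t211_neg1: assumes "tadd T" shows "t211 T (- p1) q r = - t211 T p1 q r"
  using tadd_neg(1)[OF assms, of "(0,p1)" "(q,0)" "(r,0)"] by (simp add: t211_def zero_prod_def)
lemma t211_diff1: assumes "tadd T" shows "t211 T (p1 - p2) q r = t211 T p1 q r - t211 T p2 q r"
  using tadd_diff(1)[OF assms, of "(0,p1)" "(0,p2)" "(q,0)" "(r,0)"] by (simp add: t211_def zero_prod_def)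
lemma t211_add2: assumes "tadd T" shows "t211 T p (p1 + p2) r = t211 T p p1 r + t211 T p p2 r"
  using tadd_add(2)[OF assms, of "(0,p)" "(p1,0)" "(p2,0)" "(r,0)"] by (simp add: t211_def zero_prod_def)
lemma t211_zero2: assumes "tadd T" shows "t211 T p 0 r = 0"
  using tadd_zero(2)[OF assms, of "(0,p)" "(r,0)"] by (simp add: t211_def zero_prod_def)
lemma t211_neg2: assumes "tadd T" shows "t211 T p (- p1) r = - t211 T p p1 r"
  using tadd_neg(2)[OF assms, of "(0,p)" "(p1,0)" "(r,0)"] by (simp add: t211_def zero_prod_def)
lemma t211_diff2: assumes "tadd T" shows "t211 T p (p1 - p2) r = t211 T p p1 r - t211 T p p2 r"
  using tadd_diff(2)[OF assms, of "(0,p)" "(p1,0)" "(p2,0)" "(r,0)"] by (simp add: t211_def zero_prod_def)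
lemma t211_add3: assumes "tadd T" shows "t211 T p q (p1 + p2) = t211 T p q p1 + t211 T p q p2"
  using tadd_add(3)[OF assms, of "(0,p)" "(q,0)" "(p1,0)" "(p2,0)"] by (simp add: t211_def zero_prod_def)
lemma t211_zero3: assumes "tadd T" shows "t211 T p q 0 = 0"
  using tadd_zero(3)[OF assms, of "(0,p)" "(q,0)"] by (simp add: t211_def zero_prod_def)
lemma t211_neg3: assumes "tadd T" shows "t211 T p q (- p1) = - t211 T p q p1"
  using tadd_neg(3)[OF assms, of "(0,p)" "(q,0)" "(p1,0)"] by (simp add: t211_def zero_prod_def)
lemma t211_diff3: assumes "tadd T" shows "t211 T p q (p1 - p2) = t211 T p q p1 - t211 T p q p2"
  using tadd_diff(3)[OF assms, of "(0,p)" "(q,0)" "(p1,0)" "(p2,0)"] by (simp add: t211_def zero_prod_def)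
lemma t212_add1: assumes "tadd T" shows "t212 T (p1 + p2) q r = t212 T p1 q r + t212 T p2 q r"
  using tadd_add(1)[OF assms, of "(0,p1)" "(0,p2)" "(q,0)" "(0,r)"] by (simp add: t212_def zero_prod_def)
lemma t212_zero1: assumes "tadd T" shows "t212 T 0 q r = 0"
  using tadd_zero(1)[OF assms, of "(q,0)" "(0,r)"] by (simp add: t212_def zero_prod_def)
lemma t212_neg1: assumes "tadd T" shows "t212 T (- p1) q r = - t212 T p1 q r"
  using tadd_neg(1)[OF assms, of "(0,p1)" "(q,0)" "(0,r)"] by (simp add: t212_def zero_prod_def)
lemma t212_diff1: assumes "tadd T" shows "t212 T (p1 - p2) q r = t212 T p1 q r - t212 T p2 q r"
  using tadd_diff(1)[OF assms, of "(0,p1)" "(0,p2)" "(q,0)" "(0,r)"] by (simp add: t212_def zero_prod_def)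
lemma t212_add2: assumes "tadd T" shows "t212 T p (p1 + p2) r = t212 T p p1 r + t212 T p p2 r"
  using tadd_add(2)[OF assms, of "(0,p)" "(p1,0)" "(p2,0)" "(0,r)"] by (simp add: t212_def zero_prod_def)
lemma t212_zero2: assumes "tadd T" shows "t212 T p 0 r = 0"
  using tadd_zero(2)[OF assms, of "(0,p)" "(0,r)"] by (simp add: t212_def zero_prod_def)
lemma t212_neg2: assumes "tadd T" shows "t212 T p (- p1) r = - t212 T p p1 r"
  using tadd_neg(2)[OF assms, of "(0,p)" "(p1,0)" "(0,r)"] by (simp add: t212_def zero_prod_def)
lemma t212_diff2: assumes "tadd T" shows "t212 T p (p1 - p2) r = t212 T p p1 r - t212 T p p2 r"
  using tadd_diff(2)[OF assms, of "(0,p)" "(p1,0)" "(p2,0)" "(0,r)"] by (simp add: t212_def zero_prod_def)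
lemma t212_add3: assumes "tadd T" shows "t212 T p q (p1 + p2) = t212 T p q p1 + t212 T p q p2"
  using tadd_add(3)[OF assms, of "(0,p)" "(q,0)" "(0,p1)" "(0,p2)"] by (simp add: t212_def zero_prod_def)
lemma t212_zero3: assumes "tadd T" shows "t212 T p q 0 = 0"
  using tadd_zero(3)[OF assms, of "(0,p)" "(q,0)"] by (simp add: t212_def zero_prod_def)
lemma t212_neg3: assumes "tadd T" shows "t212 T p q (- p1) = - t212 T p q p1"
  using tadd_neg(3)[OF assms, of "(0,p)" "(q,0)" "(0,p1)"] by (simp add: t212_def zero_prod_def)
lemma t212_diff3: assumes "tadd T" shows "t212 T p q (p1 - p2) = t212 T p q p1 - t212 T p q p2"
  using tadd_diff(3)[OF assms, of "(0,p)" "(q,0)" "(0,p1)" "(0,p2)"] by (simp add: t212_def zero_prod_def)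
lemma t221_add1: assumes "tadd T" shows "t221 T (p1 + p2) q r = t221 T p1 q r + t221 T p2 q r"
  using tadd_add(1)[OF assms, of "(0,p1)" "(0,p2)" "(0,q)" "(r,0)"] by (simp add: t221_def zero_prod_def)
lemma t221_zero1: assumes "tadd T" shows "t221 T 0 q r = 0"
  using tadd_zero(1)[OF assms, of "(0,q)" "(r,0)"] by (simp add: t221_def zero_prod_def)
lemma t221_neg1: assumes "tadd T" shows "t221 T (- p1) q r = - t221 T p1 q r"
  using tadd_neg(1)[OF assms, of "(0,p1)" "(0,q)" "(r,0)"] by (simp add: t221_def zero_prod_def)
lemma t221_diff1: assumes "tadd T" shows "t221 T (p1 - p2) q r = t221 T p1 q r - t221 T p2 q r"
  using tadd_diff(1)[OF assms, of "(0,p1)" "(0,p2)" "(0,q)" "(r,0)"] by (simp add: t221_def zero_prod_def)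
lemma t221_add2: assumes "tadd T" shows "t221 T p (p1 + p2) r = t221 T p p1 r + t221 T p p2 r"
  using tadd_add(2)[OF assms, of "(0,p)" "(0,p1)" "(0,p2)" "(r,0)"] by (simp add: t221_def zero_prod_def)
lemma t221_zero2: assumes "tadd T" shows "t221 T p 0 r = 0"
  using tadd_zero(2)[OF assms, of "(0,p)" "(r,0)"] by (simp add: t221_def zero_prod_def)
lemma t221_neg2: assumes "tadd T" shows "t221 T p (- p1) r = - t221 T p p1 r"
  using tadd_neg(2)[OF assms, of "(0,p)" "(0,p1)" "(r,0)"] by (simp add: t221_def zero_prod_def)
lemma t221_diff2: assumes "tadd T" shows "t221 T p (p1 - p2) r = t221 T p p1 r - t221 T p p2 r"
  using tadd_diff(2)[OF assms, of "(0,p)" "(0,p1)" "(0,p2)" "(r,0)"] by (simp add: t221_def zero_prod_def)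
lemma t221_add3: assumes "tadd T" shows "t221 T p q (p1 + p2) = t221 T p q p1 + t221 T p q p2"
  using tadd_add(3)[OF assms, of "(0,p)" "(0,q)" "(p1,0)" "(p2,0)"] by (simp add: t221_def zero_prod_def)
lemma t221_zero3: assumes "tadd T" shows "t221 T p q 0 = 0"
  using tadd_zero(3)[OF assms, of "(0,p)" "(0,q)"] by (simp add: t221_def zero_prod_def)
lemma t221_neg3: assumes "tadd T" shows "t221 T p q (- p1) = - t221 T p q p1"
  using tadd_neg(3)[OF assms, of "(0,p)" "(0,q)" "(p1,0)"] by (simp add: t221_def zero_prod_def)
lemma t221_diff3: assumes "tadd T" shows "t221 T p q (p1 - p2) = t221 T p q p1 - t221 T p q p2"
  using tadd_diff(3)[OF assms, of "(0,p)" "(0,q)" "(p1,0)" "(p2,0)"] by (simp add: t221_def zero_prod_def)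
lemma t222_add1: assumes "tadd T" shows "t222 T (p1 + p2) q r = t222 T p1 q r + t222 T p2 q r"
  using tadd_add(1)[OF assms, of "(0,p1)" "(0,p2)" "(0,q)" "(0,r)"] by (simp add: t222_def zero_prod_def)
lemma t222_zero1: assumes "tadd T" shows "t222 T 0 q r = 0"
  using tadd_zero(1)[OF assms, of "(0,q)" "(0,r)"] by (simp add: t222_def zero_prod_def)
lemma t222_neg1: assumes "tadd T" shows "t222 T (- p1) q r = - t222 T p1 q r"
  using tadd_neg(1)[OF assms, of "(0,p1)" "(0,q)" "(0,r)"] by (simp add: t222_def zero_prod_def)
lemma t222_diff1: assumes "tadd T" shows "t222 T (p1 - p2) q r = t222 T p1 q r - t222 T p2 q r"
  using tadd_diff(1)[OF assms, of "(0,p1)" "(0,p2)" "(0,q)" "(0,r)"] by (simp add: t222_def zero_prod_def)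
lemma t222_add2: assumes "tadd T" shows "t222 T p (p1 + p2) r = t222 T p p1 r + t222 T p p2 r"
  using tadd_add(2)[OF assms, of "(0,p)" "(0,p1)" "(0,p2)" "(0,r)"] by (simp add: t222_def zero_prod_def)
lemma t222_zero2: assumes "tadd T" shows "t222 T p 0 r = 0"
  using tadd_zero(2)[OF assms, of "(0,p)" "(0,r)"] by (simp add: t222_def zero_prod_def)
lemma t222_neg2: assumes "tadd T" shows "t222 T p (- p1) r = - t222 T p p1 r"
  using tadd_neg(2)[OF assms, of "(0,p)" "(0,p1)" "(0,r)"] by (simp add: t222_def zero_prod_def)
lemma t222_diff2: assumes "tadd T" shows "t222 T p (p1 - p2) r = t222 T p p1 r - t222 T p p2 r"
  using tadd_diff(2)[OF assms, of "(0,p)" "(0,p1)" "(0,p2)" "(0,r)"] by (simp add: t222_def zero_prod_def)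
lemma t222_add3: assumes "tadd T" shows "t222 T p q (p1 + p2) = t222 T p q p1 + t222 T p q p2"
  using tadd_add(3)[OF assms, of "(0,p)" "(0,q)" "(0,p1)" "(0,p2)"] by (simp add: t222_def zero_prod_def)
lemma t222_zero3: assumes "tadd T" shows "t222 T p q 0 = 0"
  using tadd_zero(3)[OF assms, of "(0,p)" "(0,q)"] by (simp add: t222_def zero_prod_def)
lemma t222_neg3: assumes "tadd T" shows "t222 T p q (- p1) = - t222 T p q p1"
  using tadd_neg(3)[OF assms, of "(0,p)" "(0,q)" "(0,p1)"] by (simp add: t222_def zero_prod_def)
lemma t222_diff3: assumes "tadd T" shows "t222 T p q (p1 - p2) = t222 T p q p1 - t222 T p q p2"
  using tadd_diff(3)[OF assms, of "(0,p)" "(0,q)" "(0,p1)" "(0,p2)"] by (simp add: t222_def zero_prod_def)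
lemmas tatoms = t111_add1 t111_zero1 t111_neg1 t111_diff1 t111_add2 t111_zero2 t111_neg2 t111_diff2 t111_add3 t111_zero3 t111_neg3 t111_diff3 t112_add1 t112_zero1 t112_neg1 t112_diff1 t112_add2 t112_zero2 t112_neg2 t112_diff2 t112_add3 t112_zero3 t112_neg3 t112_diff3 t121_add1 t121_zero1 t121_neg1 t121_diff1 t121_add2 t121_zero2 t121_neg2 t121_diff2 t121_add3 t121_zero3 t121_neg3 t121_diff3 t122_add1 t122_zero1 t122_neg1 t122_diff1 t122_add2 t122_zero2 t122_neg2 t122_diff2 t122_add3 t122_zero3 t122_neg3 t122_diff3 t211_add1 t211_zero1 t211_neg1 t211_diff1 t211_add2 t211_zero2 t211_neg2 t211_diff2 t211_add3 t211_zero3 t211_neg3 t211_diff3 t212_add1 t212_zero1 t212_neg1 t212_diff1 t212_add2 t212_zero2 t212_neg2 t212_diff2 t212_add3 t212_zero3 t212_neg3 t212_diff3 t221_add1 t221_zero1 t221_neg1 t221_diff1 t221_add2 t221_zero2 t221_neg2 t221_diff2 t221_add3 t221_zero3 t221_neg3 t221_diff3 t222_add1 t222_zero1 t222_neg1 t222_diff1 t222_add2 t222_zero2 t222_neg2 t222_diff2 t222_add3 t222_zero3 t222_neg3 t222_diff3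

lemma skew:
  assumes tT: "tadd T" and al: "\<And>x y. T x x y = 0"
  shows "T x y z = - T y x z"
proof -
  have "0 = T (x + y) (x + y) z" using al by simp
  also have "\<dots> = T x x z + T x y z + (T y x z + T y y z)"
    by (simp add: tadd_add[OF tT])
  finally have "T x y z + T y x z = 0" using al by (simp add: add.assoc)
  then show ?thesis by (metis neg_eq_iff_add_eq_0 add.commute)
qed

lemma tanti:
  assumes tT: "tadd T" and al: "\<And>x y. T x x y = 0"
  shows "t121 T a u c = - t211 T u a c" "t122 T a u w = - t212 T u a w"
  unfolding t121_def t211_def t122_def t212_def by (rule skew[OF tT al])+

lemma phi1_eval: "phi1 T X Y Z = (0, snd (T (fst X,0) (fst Y,0) (fst Z,0)))"
  by (cases X; cases Y; cases Z) (simp add: phi1_def)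
lemma mu1_eval: "mu1 T X Y Z = (fst (T (fst X,0) (fst Y,0) (fst Z,0)),
   snd (T (fst X,0) (fst Y,0) (0,snd Z)) + snd (T (0,snd X) (fst Y,0) (fst Z,0)) - snd (T (0,snd Y) (fst X,0) (fst Z,0)))"
  by (cases X; cases Y; cases Z) (simp add: mu1_def)
lemma psi_eval: "psi T X Y Z =
  (fst (T (fst X,0) (fst Y,0) (0,snd Z)) + fst (T (0,snd X) (fst Y,0) (fst Z,0)) - fst (T (0,snd Y) (fst X,0) (fst Z,0)),
   snd (T (0,snd X) (0,snd Y) (fst Z,0)) + snd (T (fst X,0) (0,snd Y) (0,snd Z)) - snd (T (fst Y,0) (0,snd X) (0,snd Z)))"
  by (cases X; cases Y; cases Z) (simp add: psi_def)
lemma mu2_eval: "mu2 T X Y Z =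
  (fst (T (0,snd X) (0,snd Y) (fst Z,0)) + fst (T (fst X,0) (0,snd Y) (0,snd Z)) - fst (T (fst Y,0) (0,snd X) (0,snd Z)),
   snd (T (0,snd X) (0,snd Y) (0,snd Z)))"
  by (cases X; cases Y; cases Z) (simp add: mu2_def)
lemma phi2_eval: "phi2 T X Y Z = (fst (T (0,snd X) (0,snd Y) (0,snd Z)), 0)"
  by (cases X; cases Y; cases Z) (simp add: phi2_def)
lemmas comp_evals = phi1_eval mu1_eval psi_eval mu2_eval phi2_eval

definition pu :: "bool \<Rightarrow> 'a::zero \<Rightarrow> 'b::zero \<Rightarrow> 'a \<times> 'b" where
  "pu b a u = (if b then (a, 0) else (0, u))"

definition bb :: "('k::field \<Rightarrow> 'v::ab_group_add \<Rightarrow> 'v) \<Rightarrow> ('v \<Rightarrow> 'v \<Rightarrow> 'v \<Rightarrow> 'v) \<Rightarrow> ('v \<Rightarrow> 'v \<Rightarrow> 'v \<Rightarrow> 'v) \<Rightarrow> 'v \<Rightarrow> 'v \<Rightarrow> 'v \<Rightarrow> 'v \<Rightarrow> 'v \<Rightarrow> 'v" where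
  "bb S P Q x0 y0 x1 y1 x = brk S 1 1 (ch1 P) (ch1 Q) [(x0, y0), (x1, y1)] x"

lemma bb_eval:
  assumes s1: "\<And>v. S 1 v = v" and sm: "\<And>v. S (-1) v = - v"
  shows "bb S P Q x0 y0 x1 y1 x =
     P (Q x0 y0 x1) y1 x + P x1 (Q x0 y0 y1) x + P x0 y0 (Q x1 y1 x) - P x1 y1 (Q x0 y0 x)
   + (Q (P x0 y0 x1) y1 x + Q x1 (P x0 y0 y1) x + Q x0 y0 (P x1 y1 x) - Q x1 y1 (P x0 y0 x))"
  unfolding bb_def brk11[OF assms] circ11[OF assms] by (simp add: ch1_def)

definition EE where "EE S T = bb S T T"

definition g1 where "g1 S T x0 y0 x1 y1 x = bb S (phi1 T) (mu1 T) x0 y0 x1 y1 x + bb S (mu1 T) (phi1 T) x0 y0 x1 y1 x"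
definition g2 where "g2 S T x0 y0 x1 y1 x = bb S (psi T) (phi1 T) x0 y0 x1 y1 x + bb S (phi1 T) (psi T) x0 y0 x1 y1 x + bb S (mu1 T) (mu1 T) x0 y0 x1 y1 x"
definition g3 where "g3 S T x0 y0 x1 y1 x = bb S (phi1 T) (mu2 T) x0 y0 x1 y1 x + bb S (psi T) (mu1 T) x0 y0 x1 y1 x + bb S (mu2 T) (phi1 T) x0 y0 x1 y1 x + bb S (mu1 T) (psi T) x0 y0 x1 y1 x"
definition g4 where "g4 S T x0 y0 x1 y1 x = bb S (phi1 T) (phi2 T) x0 y0 x1 y1 x + bb S (mu1 T) (mu2 T) x0 y0 x1 y1 x + bb S (phi2 T) (phi1 T) x0 y0 x1 y1 x + bb S (mu2 T) (mu1 T) x0 y0 x1 y1 x + bb S (psi T) (psi T) x0 y0 x1 y1 x"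
definition g5 where "g5 S T x0 y0 x1 y1 x = bb S (mu1 T) (phi2 T) x0 y0 x1 y1 x + bb S (psi T) (mu2 T) x0 y0 x1 y1 x + bb S (phi2 T) (mu1 T) x0 y0 x1 y1 x + bb S (mu2 T) (psi T) x0 y0 x1 y1 x"
definition g6 where "g6 S T x0 y0 x1 y1 x = bb S (psi T) (phi2 T) x0 y0 x1 y1 x + bb S (phi2 T) (psi T) x0 y0 x1 y1 x + bb S (mu2 T) (mu2 T) x0 y0 x1 y1 x"
definition g7 where "g7 S T x0 y0 x1 y1 x = bb S (mu2 T) (phi2 T) x0 y0 x1 y1 x + bb S (phi2 T) (mu2 T) x0 y0 x1 y1 x"
lemma pure_g1:
  assumes s1: "\<And>v. S 1 v = v" and sm: "\<And>v. S (-1) v = - v" and tT: "tadd T" and al: "\<And>x y. T x x y = 0"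
  shows "fst (g1 S T (pu b0 a0 u0) (pu b1 a1 u1) (pu b2 a2 u2) (pu b3 a3 u3) (pu b4 a4 u4)) = (if 1 = ((if b0 then 0 else 1) + (if b1 then 0 else 1) + (if b2 then 0 else 1) + (if b3 then 0 else 1) + (if b4 then 0 else 1) :: nat) + 2 then fst (EE S T (pu b0 a0 u0) (pu b1 a1 u1) (pu b2 a2 u2) (pu b3 a3 u3) (pu b4 a4 u4)) else 0) \<and>
         snd (g1 S T (pu b0 a0 u0) (pu b1 a1 u1) (pu b2 a2 u2) (pu b3 a3 u3) (pu b4 a4 u4)) = (if 1 = ((if b0 then 0 else 1) + (if b1 then 0 else 1) + (if b2 then 0 else 1) + (if b3 then 0 else 1) + (if b4 then 0 else 1) :: nat) + 1 then snd (EE S T (pu b0 a0 u0) (pu b1 a1 u1) (pu b2 a2 u2) (pu b3 a3 u3) (pu b4 a4 u4)) else 0)"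
  apply (cases b0; cases b1; cases b2; cases b3; cases b4)
  apply (simp_all add: pu_def g1_def EE_def bb_eval[OF s1 sm] comp_evals)
  apply (simp_all add: tsplit[OF tT] tatoms[OF tT])
  apply (simp_all add: tanti[OF tT al] tatoms[OF tT])
  apply ((simp_all add: algebra_simps)?)
  done

lemma pure_g2:
  assumes s1: "\<And>v. S 1 v = v" and sm: "\<And>v. S (-1) v = - v" and tT: "tadd T" and al: "\<And>x y. T x x y = 0"
  shows "fst (g2 S T (pu b0 a0 u0) (pu b1 a1 u1) (pu b2 a2 u2) (pu b3 a3 u3) (pu b4 a4 u4)) = (if 2 = ((if b0 then 0 else 1) + (if b1 then 0 else 1) + (if b2 then 0 else 1) + (if b3 then 0 else 1) + (if b4 then 0 else 1) :: nat) + 2 then fst (EE S T (pu b0 a0 u0) (pu b1 a1 u1) (pu b2 a2 u2) (pu b3 a3 u3) (pu b4 a4 u4)) else 0) \<and>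
         snd (g2 S T (pu b0 a0 u0) (pu b1 a1 u1) (pu b2 a2 u2) (pu b3 a3 u3) (pu b4 a4 u4)) = (if 2 = ((if b0 then 0 else 1) + (if b1 then 0 else 1) + (if b2 then 0 else 1) + (if b3 then 0 else 1) + (if b4 then 0 else 1) :: nat) + 1 then snd (EE S T (pu b0 a0 u0) (pu b1 a1 u1) (pu b2 a2 u2) (pu b3 a3 u3) (pu b4 a4 u4)) else 0)"
  apply (cases b0; cases b1; cases b2; cases b3; cases b4)
  apply (simp_all add: pu_def g2_def EE_def bb_eval[OF s1 sm] comp_evals)
  apply (simp_all add: tsplit[OF tT] tatoms[OF tT])
  apply (simp_all add: tanti[OF tT al] tatoms[OF tT])
  apply ((simp_all add: algebra_simps)?)
  done

lemma pure_g3: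
  assumes s1: "\<And>v. S 1 v = v" and sm: "\<And>v. S (-1) v = - v" and tT: "tadd T" and al: "\<And>x y. T x x y = 0"
  shows "fst (g3 S T (pu b0 a0 u0) (pu b1 a1 u1) (pu b2 a2 u2) (pu b3 a3 u3) (pu b4 a4 u4)) = (if 3 = ((if b0 then 0 else 1) + (if b1 then 0 else 1) + (if b2 then 0 else 1) + (if b3 then 0 else 1) + (if b4 then 0 else 1) :: nat) + 2 then fst (EE S T (pu b0 a0 u0) (pu b1 a1 u1) (pu b2 a2 u2) (pu b3 a3 u3) (pu b4 a4 u4)) else 0) \<and>
         snd (g3 S T (pu b0 a0 u0) (pu b1 a1 u1) (pu b2 a2 u2) (pu b3 a3 u3) (pu b4 a4 u4)) = (if 3 = ((if b0 then 0 else 1) + (if b1 then 0 else 1) + (if b2 then 0 else 1) + (if b3 then 0 else 1) + (if b4 then 0 else 1) :: nat) + 1 then snd (EE S T (pu b0 a0 u0) (pu b1 a1 u1) (pu b2 a2 u2) (pu b3 a3 u3) (pu b4 a4 u4)) else 0)"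
  apply (cases b0; cases b1; cases b2; cases b3; cases b4)
  apply (simp_all add: pu_def g3_def EE_def bb_eval[OF s1 sm] comp_evals)
  apply (simp_all add: tsplit[OF tT] tatoms[OF tT])
  apply (simp_all add: tanti[OF tT al] tatoms[OF tT])
  apply ((simp_all add: algebra_simps)?)
  done

lemma pure_g4:
  assumes s1: "\<And>v. S 1 v = v" and sm: "\<And>v. S (-1) v = - v" and tT: "tadd T" and al: "\<And>x y. T x x y = 0"
  shows "fst (g4 S T (pu b0 a0 u0) (pu b1 a1 u1) (pu b2 a2 u2) (pu b3 a3 u3) (pu b4 a4 u4)) = (if 4 = ((if b0 then 0 else 1) + (if b1 then 0 else 1) + (if b2 then 0 else 1) + (if b3 then 0 else 1) + (if b4 then 0 else 1) :: nat) + 2 then fst (EE S T (pu b0 a0 u0) (pu b1 a1 u1) (pu b2 a2 u2) (pu b3 a3 u3) (pu b4 a4 u4)) else 0) \<and>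
         snd (g4 S T (pu b0 a0 u0) (pu b1 a1 u1) (pu b2 a2 u2) (pu b3 a3 u3) (pu b4 a4 u4)) = (if 4 = ((if b0 then 0 else 1) + (if b1 then 0 else 1) + (if b2 then 0 else 1) + (if b3 then 0 else 1) + (if b4 then 0 else 1) :: nat) + 1 then snd (EE S T (pu b0 a0 u0) (pu b1 a1 u1) (pu b2 a2 u2) (pu b3 a3 u3) (pu b4 a4 u4)) else 0)"
  apply (cases b0; cases b1; cases b2; cases b3; cases b4)
  apply (simp_all add: pu_def g4_def EE_def bb_eval[OF s1 sm] comp_evals)
  apply (simp_all add: tsplit[OF tT] tatoms[OF tT])
  apply (simp_all add: tanti[OF tT al] tatoms[OF tT])
  apply ((simp_all add: algebra_simps)?)
  done

lemma pure_g5: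
  assumes s1: "\<And>v. S 1 v = v" and sm: "\<And>v. S (-1) v = - v" and tT: "tadd T" and al: "\<And>x y. T x x y = 0"
  shows "fst (g5 S T (pu b0 a0 u0) (pu b1 a1 u1) (pu b2 a2 u2) (pu b3 a3 u3) (pu b4 a4 u4)) = (if 5 = ((if b0 then 0 else 1) + (if b1 then 0 else 1) + (if b2 then 0 else 1) + (if b3 then 0 else 1) + (if b4 then 0 else 1) :: nat) + 2 then fst (EE S T (pu b0 a0 u0) (pu b1 a1 u1) (pu b2 a2 u2) (pu b3 a3 u3) (pu b4 a4 u4)) else 0) \<and>
         snd (g5 S T (pu b0 a0 u0) (pu b1 a1 u1) (pu b2 a2 u2) (pu b3 a3 u3) (pu b4 a4 u4)) = (if 5 = ((if b0 then 0 else 1) + (if b1 then 0 else 1) + (if b2 then 0 else 1) + (if b3 then 0 else 1) + (if b4 then 0 else 1) :: nat) + 1 then snd (EE S T (pu b0 a0 u0) (pu b1 a1 u1) (pu b2 a2 u2) (pu b3 a3 u3) (pu b4 a4 u4)) else 0)"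
  apply (cases b0; cases b1; cases b2; cases b3; cases b4)
  apply (simp_all add: pu_def g5_def EE_def bb_eval[OF s1 sm] comp_evals)
  apply (simp_all add: tsplit[OF tT] tatoms[OF tT])
  apply (simp_all add: tanti[OF tT al] tatoms[OF tT])
  apply ((simp_all add: algebra_simps)?)
  done

lemma pure_g6:
  assumes s1: "\<And>v. S 1 v = v" and sm: "\<And>v. S (-1) v = - v" and tT: "tadd T" and al: "\<And>x y. T x x y = 0"
  shows "fst (g6 S T (pu b0 a0 u0) (pu b1 a1 u1) (pu b2 a2 u2) (pu b3 a3 u3) (pu b4 a4 u4)) = (if 6 = ((if b0 then 0 else 1) + (if b1 then 0 else 1) + (if b2 then 0 else 1) + (if b3 then 0 else 1) + (if b4 then 0 else 1) :: nat) + 2 then fst (EE S T (pu b0 a0 u0) (pu b1 a1 u1) (pu b2 a2 u2) (pu b3 a3 u3) (pu b4 a4 u4)) else 0) \<and>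
         snd (g6 S T (pu b0 a0 u0) (pu b1 a1 u1) (pu b2 a2 u2) (pu b3 a3 u3) (pu b4 a4 u4)) = (if 6 = ((if b0 then 0 else 1) + (if b1 then 0 else 1) + (if b2 then 0 else 1) + (if b3 then 0 else 1) + (if b4 then 0 else 1) :: nat) + 1 then snd (EE S T (pu b0 a0 u0) (pu b1 a1 u1) (pu b2 a2 u2) (pu b3 a3 u3) (pu b4 a4 u4)) else 0)"
  apply (cases b0; cases b1; cases b2; cases b3; cases b4)
  apply (simp_all add: pu_def g6_def EE_def bb_eval[OF s1 sm] comp_evals)
  apply (simp_all add: tsplit[OF tT] tatoms[OF tT])
  apply (simp_all add: tanti[OF tT al] tatoms[OF tT])
  apply ((simp_all add: algebra_simps)?)
  done

lemma pure_g7: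
  assumes s1: "\<And>v. S 1 v = v" and sm: "\<And>v. S (-1) v = - v" and tT: "tadd T" and al: "\<And>x y. T x x y = 0"
  shows "fst (g7 S T (pu b0 a0 u0) (pu b1 a1 u1) (pu b2 a2 u2) (pu b3 a3 u3) (pu b4 a4 u4)) = (if 7 = ((if b0 then 0 else 1) + (if b1 then 0 else 1) + (if b2 then 0 else 1) + (if b3 then 0 else 1) + (if b4 then 0 else 1) :: nat) + 2 then fst (EE S T (pu b0 a0 u0) (pu b1 a1 u1) (pu b2 a2 u2) (pu b3 a3 u3) (pu b4 a4 u4)) else 0) \<and>
         snd (g7 S T (pu b0 a0 u0) (pu b1 a1 u1) (pu b2 a2 u2) (pu b3 a3 u3) (pu b4 a4 u4)) = (if 7 = ((if b0 then 0 else 1) + (if b1 then 0 else 1) + (if b2 then 0 else 1) + (if b3 then 0 else 1) + (if b4 then 0 else 1) :: nat) + 1 then snd (EE S T (pu b0 a0 u0) (pu b1 a1 u1) (pu b2 a2 u2) (pu b3 a3 u3) (pu b4 a4 u4)) else 0)"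
  apply (cases b0; cases b1; cases b2; cases b3; cases b4)
  apply (simp_all add: pu_def g7_def EE_def bb_eval[OF s1 sm] comp_evals)
  apply (simp_all add: tsplit[OF tT] tatoms[OF tT])
  apply (simp_all add: tanti[OF tT al] tatoms[OF tT])
  apply ((simp_all add: algebra_simps)?)
  done

definition add5 :: "('g::ab_group_add \<Rightarrow> 'g \<Rightarrow> 'g \<Rightarrow> 'g \<Rightarrow> 'g \<Rightarrow> 'g) \<Rightarrow> bool" where
  "add5 F \<longleftrightarrow>
    (\<forall>a b y0 x1 y1 x. F (a + b) y0 x1 y1 x = F a y0 x1 y1 x + F b y0 x1 y1 x) \<and>
    (\<forall>a b x0 x1 y1 x. F x0 (a + b) x1 y1 x = F x0 a x1 y1 x + F x0 b x1 y1 x) \<and>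
    (\<forall>a b x0 y0 y1 x. F x0 y0 (a + b) y1 x = F x0 y0 a y1 x + F x0 y0 b y1 x) \<and>
    (\<forall>a b x0 y0 x1 x. F x0 y0 x1 (a + b) x = F x0 y0 x1 a x + F x0 y0 x1 b x) \<and>
    (\<forall>a b x0 y0 x1 y1. F x0 y0 x1 y1 (a + b) = F x0 y0 x1 y1 a + F x0 y0 x1 y1 b)"

lemma add5_plus:
  assumes "add5 F" "add5 G"
  shows "add5 (\<lambda>x0 y0 x1 y1 x. F x0 y0 x1 y1 x + G x0 y0 x1 y1 x)"
  using assms unfolding add5_def by (simp add: algebra_simps)

lemma bb_add5:
  assumes s1: "\<And>v. S 1 v = v" and sm: "\<And>v. S (-1) v = - v" and tP: "tadd P" and tQ: "tadd Q"
  shows "add5 (bb S P Q)"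
  unfolding add5_def bb_eval[OF s1 sm]
  by (simp add: tadd_add[OF tP] tadd_add[OF tQ] algebra_simps)

lemma comp_tadd:
  assumes tT: "tadd T"
  shows "tadd (phi1 T)" "tadd (mu1 T)" "tadd (psi T)" "tadd (mu2 T)" "tadd (phi2 T)"
  unfolding tadd_def comp_evals
  by (simp_all add: tsplit[OF tT] tatoms[OF tT]; simp add: algebra_simps)+

lemma decomp:
  fixes F :: "('a::ab_group_add \<times> 'b::ab_group_add) \<Rightarrow> ('a \<times> 'b) \<Rightarrow> ('a \<times> 'b) \<Rightarrow> ('a \<times> 'b) \<Rightarrow> ('a \<times> 'b) \<Rightarrow> ('a \<times> 'b)"
  assumes A: "add5 F"
    and H: "\<And>b0 b1 b2 b3 b4 a0 a1 a2 a3 a4 u0 u1 u2 u3 u4.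
      F (pu b0 a0 u0) (pu b1 a1 u1) (pu b2 a2 u2) (pu b3 a3 u3) (pu b4 a4 u4) = 0"
  shows "F x0 y0 x1 y1 x = 0"
proof -
  have sp: "(a, u) = pu True a u + pu False a u" for a :: 'a and u :: 'b by (simp add: pu_def)
  note A' = A[unfolded add5_def]
  have h1: "F z0 (pu b1 a1 u1) (pu b2 a2 u2) (pu b3 a3 u3) (pu b4 a4 u4) = 0" for z0 b1 a1 u1 b2 a2 u2 b3 a3 u3 b4 a4 u4
  proof (cases z0)
    case (Pair a u)
    then show ?thesis using A' H by (simp only: sp) simp
  qed
  have h2: "F z0 z1 (pu b2 a2 u2) (pu b3 a3 u3) (pu b4 a4 u4) = 0" for z0 z1 b2 a2 u2 b3 a3 u3 b4 a4 u4
  proof (cases z1)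
    case (Pair a u)
    then show ?thesis using A' h1 by (simp only: sp) simp
  qed
  have h3: "F z0 z1 z2 (pu b3 a3 u3) (pu b4 a4 u4) = 0" for z0 z1 z2 b3 a3 u3 b4 a4 u4
  proof (cases z2)
    case (Pair a u)
    then show ?thesis using A' h2 by (simp only: sp) simp
  qed
  have h4: "F z0 z1 z2 z3 (pu b4 a4 u4) = 0" for z0 z1 z2 z3 b4 a4 u4
  proof (cases z3)
    case (Pair a u)
    then show ?thesis using A' h3 by (simp only: sp) simp
  qed
  show ?thesis
  proof (cases x)
    case (Pair a u)
    then show ?thesis using A' h4 by (simp only: sp) simp
  qed
qed

lemma cz2: "cochain_zero 2 F \<longleftrightarrow> (\<forall>x0 y0 x1 y1 x. F [(x0, y0), (x1, y1)] x = 0)"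
  unfolding cochain_zero_def
  by (auto simp: numeral_2_eq_2 length_Suc_conv)

lemma pick_fst:
  assumes "c \<le> (5::nat)"
    "(if 2 = c + 2 then e else 0) = 0" "(if 3 = c + 2 then e else 0) = 0" "(if 4 = c + 2 then e else 0) = 0"
    "(if 5 = c + 2 then e else 0) = 0" "(if 6 = c + 2 then e else 0) = 0" "(if 7 = c + 2 then e else 0) = 0"
  shows "e = 0"
  using assms by (auto split: if_splits)

lemma pick_snd:
  assumes "c \<le> (5::nat)"
    "(if 1 = c + 1 then e else 0) = 0" "(if 2 = c + 1 then e else 0) = 0" "(if 3 = c + 1 then e else 0) = 0"
    "(if 4 = c + 1 then e else 0) = 0" "(if 5 = c + 1 then e else 0) = 0" "(if 6 = c + 1 then e else 0) = 0"
  shows "e = 0"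
  using assms by (auto split: if_splits)


lemma lin_facts:
  assumes "Vector_Spaces.linear S S f"
  shows "module S" "f (x + y) = f x + f y"
  using assms unfolding module_hom_iff_linear[symmetric] module_hom_iff by auto

lemma half1:
  fixes S :: "'k::field_char_0 \<Rightarrow> 'v::ab_group_add \<Rightarrow> 'v" and X Y :: 'v
  assumes M: "module S"
  shows "X = 0 \<longleftrightarrow> X + X = 0"
proof -
  have "X + X = S 2 X" using module.scale_left_distrib[OF M, of 1 1 X] module.scale_one[OF M] by simp
  moreover have "S 2 X = 0 \<longleftrightarrow> X = 0"
    using vector_space.scale_eq_0_iff[OF M[unfolded module_iff_vector_space]] by simp
  ultimately show ?thesis by simp
qed

lemma half2:
  fixes S :: "'k::field_char_0 \<Rightarrow> 'v::ab_group_add \<Rightarrow> 'v" and X Y :: 'v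
  assumes M: "module S"
  shows "X + S (1/2) Y = 0 \<longleftrightarrow> X + X + Y = 0"
proof -
  have "S 2 (X + S (1/2) Y) = X + X + Y"
    using module.scale_left_distrib[OF M, of 1 1 X] module.scale_one[OF M]
      module.scale_right_distrib[OF M, of 2 X "S (1/2) Y"] module.scale_scale[OF M, of 2 "1/2" Y]
    by simp
  moreover have "S 2 Z = 0 \<longleftrightarrow> Z = 0" for Z
    using vector_space.scale_eq_0_iff[OF M[unfolded module_iff_vector_space]] by simp
  ultimately show ?thesis by metis
qed

lemma bb_sym:
  assumes s1: "\<And>v. S 1 v = v" and sm: "\<And>v. S (-1) v = - v"
  shows "bb S P Q x0 y0 x1 y1 x = bb S Q P x0 y0 x1 y1 x"
  unfolding bb_eval[OF s1 sm] by (simp add: add.commute)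

lemma g_add5:
  assumes s1: "\<And>v. S 1 v = v" and sm: "\<And>v. S (-1) v = - v" and tT: "tadd T"
  shows "add5 (g1 S T)" "add5 (g2 S T)" "add5 (g3 S T)" "add5 (g4 S T)" "add5 (g5 S T)"
    "add5 (g6 S T)" "add5 (g7 S T)"
  unfolding g1_def[abs_def] g2_def[abs_def] g3_def[abs_def] g4_def[abs_def] g5_def[abs_def]
    g6_def[abs_def] g7_def[abs_def]
  by (intro add5_plus bb_add5[OF s1 sm] comp_tadd[OF tT])+

theorem proposition3p8:
  fixes s1 :: "'k::field_char_0 \<Rightarrow> 'a::ab_group_add \<Rightarrow> 'a"
    and s2 :: "'k \<Rightarrow> 'b::ab_group_add \<Rightarrow> 'b"
    and T :: "('a \<times> 'b) \<Rightarrow> ('a \<times> 'b) \<Rightarrow> ('a \<times> 'b) \<Rightarrow> ('a \<times> 'b)"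
  assumes "vector_space s1" and "vector_space s2"
    and "LTS_cochain1 (prod_scale s1 s2) T"
  shows "cochain_zero 2 (brk (prod_scale s1 s2) 1 1 (ch1 T) (ch1 T)) \<longleftrightarrow>
    (let S = prod_scale s1 s2; B = brk S 1 1;
         F1 = ch1 (phi1 T); M1 = ch1 (mu1 T); P = ch1 (psi T); M2 = ch1 (mu2 T); F2 = ch1 (phi2 T)
     in cochain_zero 2 (B F1 M1) \<and>
        cochain_zero 2 (cadd (B P F1) (cscale S (1/2) (B M1 M1))) \<and>
        cochain_zero 2 (cadd (B F1 M2) (B P M1)) \<and>
        cochain_zero 2 (cadd (cadd (B F1 F2) (B M1 M2)) (cscale S (1/2) (B P P))) \<and>
        cochain_zero 2 (cadd (B M1 F2) (B P M2)) \<and>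
        cochain_zero 2 (cadd (B P F2) (cscale S (1/2) (B M2 M2))) \<and>
        cochain_zero 2 (B M2 F2))"
proof -
  define S where "S = prod_scale s1 s2"
  have tri: "trilinear S T" and al: "\<And>x y. T x x y = 0"
    using assms(3) unfolding LTS_cochain1_def S_def by auto
  have l1: "Vector_Spaces.linear S S (\<lambda>a. T a b c)" for b c using tri unfolding trilinear_def by blast
  have l2: "Vector_Spaces.linear S S (\<lambda>b. T a b c)" for a c using tri unfolding trilinear_def by blast
  have l3: "Vector_Spaces.linear S S (\<lambda>c. T a b c)" for a b using tri unfolding trilinear_def by blast
  have M: "module S" using lin_facts(1)[OF l1] .
  have tT: "tadd T" unfolding tadd_def
    using lin_facts(2)[OF l1] lin_facts(2)[OF l2] lin_facts(2)[OF l3] by blast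
  have s1: "\<And>v. S 1 v = v" using module.scale_one[OF M] .
  have sm: "\<And>v. S (-1) v = - v" using module.scale_minus_left[OF M, of 1] module.scale_one[OF M] by simp
  have gc1: "bb S (phi1 T) (mu1 T) x0 y0 x1 y1 x = 0 \<longleftrightarrow> g1 S T x0 y0 x1 y1 x = 0" for x0 y0 x1 y1 x
    unfolding g1_def bb_sym[OF s1 sm, of "mu1 T"] by (rule half1[OF M])
  have gc2: "bb S (psi T) (phi1 T) x0 y0 x1 y1 x + S (1/2) (bb S (mu1 T) (mu1 T) x0 y0 x1 y1 x) = 0
      \<longleftrightarrow> g2 S T x0 y0 x1 y1 x = 0" for x0 y0 x1 y1 x
    unfolding g2_def bb_sym[OF s1 sm, of "phi1 T" "psi T"] by (rule half2[OF M])
  have gc3: "bb S (phi1 T) (mu2 T) x0 y0 x1 y1 x + bb S (psi T) (mu1 T) x0 y0 x1 y1 x = 0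
      \<longleftrightarrow> g3 S T x0 y0 x1 y1 x = 0" for x0 y0 x1 y1 x
    unfolding g3_def bb_sym[OF s1 sm, of "mu2 T" "phi1 T"] bb_sym[OF s1 sm, of "mu1 T" "psi T"]
    by (subst half1[OF M]) (simp add: ac_simps)
  have gc4: "bb S (phi1 T) (phi2 T) x0 y0 x1 y1 x + bb S (mu1 T) (mu2 T) x0 y0 x1 y1 x
        + S (1/2) (bb S (psi T) (psi T) x0 y0 x1 y1 x) = 0
      \<longleftrightarrow> g4 S T x0 y0 x1 y1 x = 0" for x0 y0 x1 y1 x
    unfolding g4_def bb_sym[OF s1 sm, of "phi2 T" "phi1 T"] bb_sym[OF s1 sm, of "mu2 T" "mu1 T"]
    by (subst half2[OF M]) (simp add: ac_simps)
  have gc5: "bb S (mu1 T) (phi2 T) x0 y0 x1 y1 x + bb S (psi T) (mu2 T) x0 y0 x1 y1 x = 0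
      \<longleftrightarrow> g5 S T x0 y0 x1 y1 x = 0" for x0 y0 x1 y1 x
    unfolding g5_def bb_sym[OF s1 sm, of "phi2 T" "mu1 T"] bb_sym[OF s1 sm, of "mu2 T" "psi T"]
    by (subst half1[OF M]) (simp add: ac_simps)
  have gc6: "bb S (psi T) (phi2 T) x0 y0 x1 y1 x + S (1/2) (bb S (mu2 T) (mu2 T) x0 y0 x1 y1 x) = 0
      \<longleftrightarrow> g6 S T x0 y0 x1 y1 x = 0" for x0 y0 x1 y1 x
    unfolding g6_def bb_sym[OF s1 sm, of "phi2 T" "psi T"] by (rule half2[OF M])
  have gc7: "bb S (mu2 T) (phi2 T) x0 y0 x1 y1 x = 0 \<longleftrightarrow> g7 S T x0 y0 x1 y1 x = 0" for x0 y0 x1 y1 x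
    unfolding g7_def bb_sym[OF s1 sm, of "phi2 T"] by (rule half1[OF M])
  have bbf: "brk S 1 1 (ch1 P) (ch1 Q) [(x0, y0), (x1, y1)] x = bb S P Q x0 y0 x1 y1 x" for P Q x0 y0 x1 y1 x
    by (simp add: bb_def)
  have R: "(let S = prod_scale s1 s2; B = brk S 1 1;
         F1 = ch1 (phi1 T); M1 = ch1 (mu1 T); P = ch1 (psi T); M2 = ch1 (mu2 T); F2 = ch1 (phi2 T)
     in cochain_zero 2 (B F1 M1) \<and>
        cochain_zero 2 (cadd (B P F1) (cscale S (1/2) (B M1 M1))) \<and>
        cochain_zero 2 (cadd (B F1 M2) (B P M1)) \<and>
        cochain_zero 2 (cadd (cadd (B F1 F2) (B M1 M2)) (cscale S (1/2) (B P P))) \<and>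
        cochain_zero 2 (cadd (B M1 F2) (B P M2)) \<and>
        cochain_zero 2 (cadd (B P F2) (cscale S (1/2) (B M2 M2))) \<and>
        cochain_zero 2 (B M2 F2)) \<longleftrightarrow>
     (\<forall>x0 y0 x1 y1 x. g1 S T x0 y0 x1 y1 x = 0) \<and> (\<forall>x0 y0 x1 y1 x. g2 S T x0 y0 x1 y1 x = 0) \<and>
     (\<forall>x0 y0 x1 y1 x. g3 S T x0 y0 x1 y1 x = 0) \<and> (\<forall>x0 y0 x1 y1 x. g4 S T x0 y0 x1 y1 x = 0) \<and>
     (\<forall>x0 y0 x1 y1 x. g5 S T x0 y0 x1 y1 x = 0) \<and> (\<forall>x0 y0 x1 y1 x. g6 S T x0 y0 x1 y1 x = 0) \<and>
     (\<forall>x0 y0 x1 y1 x. g7 S T x0 y0 x1 y1 x = 0)"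
    unfolding Let_def S_def[symmetric] cz2 cadd_def cscale_def bbf
    by (simp only: gc1 gc2 gc3 gc4 gc5 gc6 gc7)
  have L: "cochain_zero 2 (brk (prod_scale s1 s2) 1 1 (ch1 T) (ch1 T)) \<longleftrightarrow>
      (\<forall>x0 y0 x1 y1 x. EE S T x0 y0 x1 y1 x = 0)"
    unfolding S_def[symmetric] cz2 bbf EE_def ..
  have EA: "add5 (EE S T)" unfolding EE_def by (rule bb_add5[OF s1 sm tT tT])
  note GA = g_add5[OF s1 sm tT]
  note PG = pure_g1[OF s1 sm tT al] pure_g2[OF s1 sm tT al] pure_g3[OF s1 sm tT al]
    pure_g4[OF s1 sm tT al] pure_g5[OF s1 sm tT al] pure_g6[OF s1 sm tT al] pure_g7[OF s1 sm tT al]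
  have mid: "(\<forall>x0 y0 x1 y1 x. EE S T x0 y0 x1 y1 x = 0) \<longleftrightarrow>
     (\<forall>x0 y0 x1 y1 x. g1 S T x0 y0 x1 y1 x = 0) \<and> (\<forall>x0 y0 x1 y1 x. g2 S T x0 y0 x1 y1 x = 0) \<and>
     (\<forall>x0 y0 x1 y1 x. g3 S T x0 y0 x1 y1 x = 0) \<and> (\<forall>x0 y0 x1 y1 x. g4 S T x0 y0 x1 y1 x = 0) \<and>
     (\<forall>x0 y0 x1 y1 x. g5 S T x0 y0 x1 y1 x = 0) \<and> (\<forall>x0 y0 x1 y1 x. g6 S T x0 y0 x1 y1 x = 0) \<and>
     (\<forall>x0 y0 x1 y1 x. g7 S T x0 y0 x1 y1 x = 0)" (is "?A \<longleftrightarrow> ?B")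
  proof
    assume H: ?A
    show ?B
      by (intro conjI allI; rule decomp[OF GA(1)] decomp[OF GA(2)] decomp[OF GA(3)] decomp[OF GA(4)]
          decomp[OF GA(5)] decomp[OF GA(6)] decomp[OF GA(7)];
          simp add: prod_eq_iff PG H)
  next
    assume H: ?B
    show ?A
    proof (intro allI, rule decomp[OF EA])
      fix b0 b1 b2 b3 b4 a0 a1 a2 a3 a4 u0 u1 u2 u3 u4
      define c where "c = ((if b0 then 0 else 1) + (if b1 then 0 else 1) + (if b2 then 0 else 1)
        + (if b3 then 0 else 1) + (if b4 then 0 else 1) :: nat)"
      have c5: "c \<le> 5" unfolding c_def by simp
      let ?E = "EE S T (pu b0 a0 u0) (pu b1 a1 u1) (pu b2 a2 u2) (pu b3 a3 u3) (pu b4 a4 u4)"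
      have f: "fst ?E = 0"
        apply (rule pick_fst[OF c5])
        using PG[of b0 a0 u0 b1 a1 u1 b2 a2 u2 b3 a3 u3 b4 a4 u4] H unfolding c_def[symmetric]
        by simp_all
      have s: "snd ?E = 0"
        apply (rule pick_snd[OF c5])
        using PG[of b0 a0 u0 b1 a1 u1 b2 a2 u2 b3 a3 u3 b4 a4 u4] H unfolding c_def[symmetric]
        by simp_all
      show "?E = 0" using f s by (simp add: prod_eq_iff)
    qed
  qed
  show ?thesis using L mid R by simp
qed

end
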